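(* Let $U=f+g$ satisfy assumption (H1) and assume (H2), and assume $0<\int_{\mathbb{R}^d}e^{-U(x)}\,dx<\infty$. Let $\pi(x)=e^{-U(x)}/\int e^{-U}$ and, for $\lambda>0$, $\pi^\lambda(x)=e^{-U^\lambda(x)}/\int e^{-U^\lambda}$. Then $\lim_{\lambda\to0}\|\pi^\lambda-\pi\|_{TV}=0$.
   Context: Assumption (H1): $U=f+g$ where $f:\mathbb{R}^d\to\mathbb{R}$ and $g:\mathbb{R}^d\to(-\infty,+\infty]$ are both bounded from below; $f$ is convex, continuously differentiable, and $\nabla f$ is $L_f$-Lipschitz; $g$ is proper, convex and lower semicontinuous. Assumption (H2): at least one of: (i) $e^{-g}$ is Lebesgue integrable on $\mathbb{R}^d$; (ii) $g$ is Lipschitz. For $\lambda>0$, $g^\lambda(x)=\min_{y\in\mathbb{R}^d}\{g(y)+(2\lambda)^{-1}\|x-y\|^2\}$ (Moreau–Yosida envelope) and $U^\lambda=f+g^\lambda$. The total variation norm of two probability measures $\mu,\nu$ on $\mathbb{R}^d$ is $\|\mu-\nu\|_{TV}=\sup\{|\int h\,d\mu-\int h\,d\nu|: h \text{ Borel measurable},\ \sup|h|\le1\}$ (for densities this equals $\int|\mu(x)-\nu(x)|\,dx$). *)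

theory Defs
  imports "HOL-Analysis.Analysis"
begin

text \<open>Extended-real-valued functions g : R^d -> (-inf, +inf] are modelled as
  functions into ereal that never take the value -inf.\<close>

definition proper_ereal :: "('a \<Rightarrow> ereal) \<Rightarrow> bool" where
  "proper_ereal g \<longleftrightarrow> (\<forall>x. g x \<noteq> -\<infinity>) \<and> (\<exists>x. g x \<noteq> \<infinity>)"

text \<open>Convexity of an extended-real-valued function (standard convention 0 * inf = 0).\<close>
definition convex_ereal :: "('a::real_vector \<Rightarrow> ereal) \<Rightarrow> bool" where
  "convex_ereal g \<longleftrightarrow> (\<forall>x y t. 0 \<le> t \<and> t \<le> 1 \<longrightarrow>
      g ((1 - t) *\<^sub>R x + t *\<^sub>R y) \<le> ereal (1 - t) * g x + ereal t * g y)"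

definition lsc_ereal :: "('a::topological_space \<Rightarrow> ereal) \<Rightarrow> bool" where
  "lsc_ereal g \<longleftrightarrow> (\<forall>c. closed {x. g x \<le> c})"

definition expneg :: "ereal \<Rightarrow> real" where
  "expneg v = (if v = \<infinity> then 0 else exp (- real_of_ereal v))"

definition moreau_env :: "real \<Rightarrow> ('a::real_normed_vector \<Rightarrow> ereal) \<Rightarrow> 'a \<Rightarrow> ereal" where
  "moreau_env lam g x = (INF y. g y + ereal ((norm (x - y))\<^sup>2 / (2 * lam)))"

definition gibbs_density :: "('a::euclidean_space \<Rightarrow> ereal) \<Rightarrow> 'a \<Rightarrow> real" where
  "gibbs_density V x = expneg (V x) / enn2real (\<integral>\<^sup>+ y. ennreal (expneg (V y)) \<partial>lborel)"

definition tv_dist :: "('a::euclidean_space \<Rightarrow> real) \<Rightarrow> ('a \<Rightarrow> real) \<Rightarrow> ennreal" where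
  "tv_dist p q = (\<integral>\<^sup>+ x. ennreal \<bar>p x - q x\<bar> \<partial>lborel)"

end

theory Submission
  imports Defs
begin

lemma expneg_nonneg: "0 \<le> expneg v" by (simp add: expneg_def)

lemma expneg_ereal[simp]: "expneg (ereal r) = exp (- r)" by (simp add: expneg_def)

lemma expneg_antimono:
  assumes "v \<le> w" "v \<noteq> -\<infinity>"
  shows "expneg w \<le> expneg v"
  using assms by (cases v; cases w) (auto simp: expneg_def)

lemma expneg_measurable[measurable]: "expneg \<in> borel_measurable borel"
  unfolding expneg_def by measurable

lemma moreau_le:
  assumes "0 < lam" shows "moreau_env lam g x \<le> g x"
proof -
  have "moreau_env lam g x \<le> g x + ereal ((norm (x - x))\<^sup>2 / (2 * lam))"
    unfolding moreau_env_def by (rule INF_lower) simp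
  then show ?thesis by simp
qed

lemma moreau_ge:
  assumes "0 < lam" "\<And>y. ereal m \<le> g y" shows "ereal m \<le> moreau_env lam g x"
  unfolding moreau_env_def
proof (rule INF_greatest)
  fix y
  have "ereal m + 0 \<le> g y + ereal ((norm (x - y))\<^sup>2 / (2 * lam))"
    using assms by (intro add_mono) auto
  then show "ereal m \<le> g y + ereal ((norm (x - y))\<^sup>2 / (2 * lam))" by simp
qed

lemma moreau_fin:
  assumes "0 < lam" "g y0 \<noteq> \<infinity>" "\<And>y. g y \<noteq> -\<infinity>" shows "moreau_env lam g x < \<infinity>"
proof -
  have "moreau_env lam g x \<le> g y0 + ereal ((norm (x - y0))\<^sup>2 / (2 * lam))"
    unfolding moreau_env_def by (rule INF_lower) simp
  also have "\<dots> < \<infinity>" using assms(2) assms(3)[of y0] by (cases "g y0") auto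
  finally show ?thesis .
qed

lemma moreau_mono:
  assumes "0 < l1" "l1 \<le> l2" shows "moreau_env l2 g x \<le> moreau_env l1 g x"
  unfolding moreau_env_def
proof (rule INF_mono)
  fix y show "\<exists>y'\<in>UNIV. g y' + ereal ((norm (x - y'))\<^sup>2 / (2 * l2)) \<le> g y + ereal ((norm (x - y))\<^sup>2 / (2 * l1))"
    using assms by (intro bexI[of _ y] add_mono) (auto intro!: divide_left_mono)
qed

lemma moreau_lsc:
  assumes lsc: "lsc_ereal g" and m: "\<And>y. ereal m \<le> g y" and c: "ereal c < g x"
  shows "\<exists>l0>0. \<forall>lam. 0 < lam \<and> lam \<le> l0 \<longrightarrow> ereal c \<le> moreau_env lam g x"
proof -
  have "open (- {y. g y \<le> ereal c})" using lsc unfolding lsc_ereal_def by auto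
  moreover have "x \<in> - {y. g y \<le> ereal c}" using c by auto
  ultimately obtain d where d: "d > 0" "ball x d \<subseteq> - {y. g y \<le> ereal c}"
    using open_contains_ball by blast
  define l0 where "l0 = d\<^sup>2 / (2 * (\<bar>c - m\<bar> + 1))"
  have "0 < 2 * (\<bar>c - m\<bar> + (1::real))" by (smt (verit) abs_ge_zero)
  then have l0: "l0 > 0" using d unfolding l0_def by (intro divide_pos_pos) auto
  show ?thesis
  proof (intro exI[of _ l0] conjI allI impI l0)
    fix lam assume lam: "0 < lam \<and> lam \<le> l0"
    show "ereal c \<le> moreau_env lam g x"
      unfolding moreau_env_def
    proof (rule INF_greatest)
      fix y
      show "ereal c \<le> g y + ereal ((norm (x - y))\<^sup>2 / (2 * lam))"
      proof (cases "dist x y < d")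
        case True
        then have "y \<in> ball x d" by simp
        then have "\<not> g y \<le> ereal c" using d by blast
        then have "ereal c < g y" by simp
        moreover have "g y \<le> g y + ereal ((norm (x - y))\<^sup>2 / (2 * lam))"
          using lam by (simp add: add_increasing2)
        ultimately show ?thesis by simp
      next
        case False
        then have nd: "d \<le> norm (x - y)" by (simp add: dist_norm)
        have "d\<^sup>2 \<le> (norm (x - y))\<^sup>2" using nd d by (intro power_mono) auto
        then have "d\<^sup>2 / (2 * lam) \<le> (norm (x - y))\<^sup>2 / (2 * lam)" using lam
          by (intro divide_right_mono) auto
        moreover have "d\<^sup>2 / (2 * l0) \<le> d\<^sup>2 / (2 * lam)"
          using lam d by (intro divide_left_mono) auto
        moreover have "d\<^sup>2 / (2 * l0) = \<bar>c - m\<bar> + 1" using d by (simp add: l0_def)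
        ultimately have "c - m \<le> (norm (x - y))\<^sup>2 / (2 * lam)" by linarith
        then have "ereal c \<le> ereal m + ereal ((norm (x - y))\<^sup>2 / (2 * lam))" by simp
        also have "\<dots> \<le> g y + ereal ((norm (x - y))\<^sup>2 / (2 * lam))"
          using m by (intro add_mono) auto
        finally show ?thesis .
      qed
    qed
  qed
qed


lemma lsc_measurable:
  fixes g :: "'a::euclidean_space \<Rightarrow> ereal"
  assumes "lsc_ereal g" shows "g \<in> borel_measurable borel"
  by (rule borel_measurableI_le) (use assms in \<open>auto simp: lsc_ereal_def intro!: borel_closed\<close>)

lemma moreau_measurable:
  fixes g :: "'a::euclidean_space \<Rightarrow> ereal"
  assumes lam: "0 < lam" and ninf: "\<And>z. g z \<noteq> -\<infinity>"
  shows "moreau_env lam g \<in> borel_measurable borel"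
proof (rule borel_measurableI_less)
  fix a :: ereal
  have eq: "{x. moreau_env lam g x < a} = (\<Union>z. {x. g z + ereal ((norm (x - z))\<^sup>2 / (2 * lam)) < a})"
    unfolding moreau_env_def by (auto simp: INF_less_iff)
  have "open {x. g z + ereal ((norm (x - z))\<^sup>2 / (2 * lam)) < a}" for z
  proof (cases "g z")
    case (real r)
    show ?thesis
    proof (cases a)
      case (real s)
      have "open {x. r + (norm (x - z))\<^sup>2 / (2 * lam) < s}"
        by (intro open_Collect_less continuous_intros) (use lam in auto)
      then show ?thesis using \<open>g z = ereal r\<close> real by simp
    qed (use \<open>g z = ereal r\<close> in auto)
  qed (use ninf in auto)
  then have "open {x. moreau_env lam g x < a}" unfolding eq by auto
  then show "{x \<in> space borel. moreau_env lam g x < a} \<in> sets borel" by auto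
qed

lemma expneg_tendsto:
  assumes X: "(X \<longlongrightarrow> v) F" and v: "v \<noteq> -\<infinity>"
  shows "((\<lambda>n. expneg (X n)) \<longlongrightarrow> expneg v) F"
proof (cases v)
  case (real r)
  have ev: "eventually (\<lambda>n. X n \<in> {ereal (r - 1) <..< ereal (r + 1)}) F"
    using X real by (intro topological_tendstoD) auto
  have "((\<lambda>n. exp (- real_of_ereal (X n))) \<longlongrightarrow> exp (- r)) F"
    using X real by (intro tendsto_intros) simp
  moreover have "eventually (\<lambda>n. exp (- real_of_ereal (X n)) = expneg (X n)) F"
    using ev by eventually_elim (auto simp: expneg_def)
  ultimately have "((\<lambda>n. expneg (X n)) \<longlongrightarrow> exp (- r)) F"
    by (rule Lim_transform_eventually)
  then show ?thesis using real by simp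
next
  case PInf
  show ?thesis
  proof (rule tendstoI)
    fix e :: real assume e: "0 < e"
    have "eventually (\<lambda>n. X n \<in> {ereal (- ln e) <..}) F"
      using X PInf by (intro topological_tendstoD) auto
    then show "eventually (\<lambda>n. dist (expneg (X n)) (expneg v) < e) F"
    proof eventually_elim
      case (elim n)
      show ?case
      proof (cases "X n")
        case (real s)
        then have "- ln e < s" using elim by simp
        then have "exp (- s) < exp (ln e)" by simp
        then show ?thesis using e real PInf by (simp add: expneg_def)
      qed (use e PInf elim in \<open>auto simp: expneg_def\<close>)
    qed
  qed
qed (use v in auto)

lemma moreau_tendsto:
  fixes g :: "'a::euclidean_space \<Rightarrow> ereal"
  assumes lsc: "lsc_ereal g" and m: "\<And>y. ereal m \<le> g y"
  shows "((\<lambda>lam. moreau_env lam g x) \<longlongrightarrow> g x) (at_right 0)"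
proof (rule order_tendstoI)
  fix a assume "a < g x"
  then obtain b where b: "a < ereal b" "ereal b < g x" using ereal_dense2 by blast
  obtain l0 where l0: "l0 > 0" "\<forall>lam. 0 < lam \<and> lam \<le> l0 \<longrightarrow> ereal b \<le> moreau_env lam g x"
    using moreau_lsc[OF lsc m b(2)] by blast
  show "eventually (\<lambda>lam. a < moreau_env lam g x) (at_right 0)"
    using eventually_at_right_real[OF l0(1)]
    by eventually_elim (use l0(2) b(1) in \<open>force\<close>)
next
  fix a assume "g x < a"
  show "eventually (\<lambda>lam. moreau_env lam g x < a) (at_right 0)"
    using eventually_at_right_less[of "0::real"]
    by eventually_elim (metis moreau_le \<open>g x < a\<close> le_less_trans)
qed


lemma sublevel_convex:
  assumes "convex_ereal g" shows "convex {x. g x \<le> ereal c}"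
proof (rule convexI)
  fix x y :: 'a and u v :: real
  assume xy: "x \<in> {x. g x \<le> ereal c}" "y \<in> {x. g x \<le> ereal c}" and uv: "0 \<le> u" "0 \<le> v" "u + v = 1"
  have "g ((1 - v) *\<^sub>R x + v *\<^sub>R y) \<le> ereal (1 - v) * g x + ereal v * g y"
    using assms uv unfolding convex_ereal_def by auto
  also have "\<dots> \<le> ereal (1 - v) * ereal c + ereal v * ereal c"
    using xy uv by (intro add_mono ereal_mult_left_mono) auto
  also have "\<dots> = ereal c" by (simp add: algebra_simps)
  finally show "u *\<^sub>R x + v *\<^sub>R y \<in> {x. g x \<le> ereal c}" using uv by (simp add: eq_diff_eq[symmetric])
qed

lemma bounded_of_measure:
  fixes S :: "'a::euclidean_space set"
  assumes cl: "closed S" and cv: "convex S" and pos: "0 < emeasure lborel S"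
    and fin: "emeasure lborel S < \<infinity>"
  shows "bounded S"
proof (rule ccontr)
  assume unb: "\<not> bounded S"
  have Ssets: "S \<in> sets lborel" using cl by auto
  have "interior S \<noteq> {}"
  proof
    assume "interior S = {}"
    then have "frontier S = S" using cl by (simp add: frontier_def closure_closed)
    then have "negligible S" using negligible_convex_frontier[OF cv] by simp
    then have "S \<in> null_sets lborel"
      using Ssets by (simp add: negligible_iff_null_sets null_sets_completion_iff)
    then show False using pos by auto
  qed
  then obtain z where "z \<in> interior S" by blast
  then obtain r where r: "r > 0" "ball z r \<subseteq> S" by (auto simp: mem_interior)
  define V where "V = unit_ball_vol (real DIM('a)) * (r / 2) ^ DIM('a)"
  have V: "V > 0" using r by (simp add: V_def)
  have ballV: "emeasure lborel (ball c (r/2)) = ennreal V" for c :: 'a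
    using r by (simp add: emeasure_ball V_def)
  obtain M where M: "emeasure lborel S = ennreal M" "M \<ge> 0" using fin
    by (cases "emeasure lborel S") auto
  obtain N :: nat where N: "M / V < real N" using reals_Archimedean2 by blast
  from unb obtain x where x: "x \<in> S" "2 * real N * r + 1 < dist z x"
    unfolding bounded_any_center[of S z] by (meson not_le)
  define D where "D = norm (x - z)"
  have "0 \<le> 2 * real N * r" using r by simp
  moreover have D1: "2 * real N * r + 1 < D" using x(2) by (simp add: D_def dist_norm norm_minus_commute)
  ultimately have D: "D > 0" "2 * real N * r + 1 < D" by linarith+
  define c where "c k = z + (real k * r / D) *\<^sub>R (x - z)" for k :: nat
  have sub: "ball (c k) (r/2) \<subseteq> S" if k: "k < N" for k
  proof
    fix w assume w: "w \<in> ball (c k) (r/2)"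
    define s where "s = real k * r / D"
    have s: "0 \<le> s" "s \<le> 1/2"
    proof -
      show "0 \<le> s" using r D by (simp add: s_def)
      have "real k * r \<le> real N * r" using k r by simp
      then have "2 * (real k * r) \<le> D" using D r by linarith
      then show "s \<le> 1/2" using D by (simp add: s_def field_simps)
    qed
    define p where "p = z + (1 / (1 - s)) *\<^sub>R (w - c k)"
    have "norm (w - c k) < r / 2" using w by (simp add: dist_norm norm_minus_commute)
    moreover have rs: "r * s \<le> r * (1/2)" using s r by (intro mult_left_mono) auto
    ultimately have "norm (w - c k) / (1 - s) < r"
      using s by (simp add: field_simps)
    then have "p \<in> ball z r" using s by (simp add: p_def dist_norm)
    then have pS: "p \<in> S" using r by auto
    have ck: "c k = z + s *\<^sub>R (x - z)" by (simp add: c_def s_def)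
    have "(1 - s) *\<^sub>R p = (1 - s) *\<^sub>R z + (w - c k)"
      using s by (simp add: p_def scaleR_add_right)
    then have "w = (1 - s) *\<^sub>R p + s *\<^sub>R x"
      by (simp add: ck algebra_simps)
    also have "\<dots> \<in> S" using pS x(1) s by (intro convexD[OF cv]) auto
    finally show "w \<in> S" .
  qed
  have disj: "disjoint_family_on (\<lambda>k. ball (c k) (r/2)) {..<N}"
    unfolding disjoint_family_on_def
  proof (intro ballI impI)
    fix j k assume jk: "j \<in> {..<N}" "k \<in> {..<N}" "j \<noteq> k"
    have "dist (c j) (c k) = \<bar>real j - real k\<bar> * r"
    proof -
      have "c j - c k = ((real j - real k) * r / D) *\<^sub>R (x - z)"
        by (simp add: c_def algebra_simps diff_divide_distrib)
      then have "dist (c j) (c k) = \<bar>real j - real k\<bar> * r / D * D"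
        using r D by (simp add: dist_norm D_def abs_mult)
      then show ?thesis using D by simp
    qed
    moreover have "1 \<le> \<bar>real j - real k\<bar>" using jk by linarith
    ultimately have "r \<le> dist (c j) (c k)" using r
      by (metis mult_le_cancel_right1 order_less_imp_not_less)
    then show "ball (c j) (r/2) \<inter> ball (c k) (r/2) = {}"
      by (auto simp: dist_commute) (smt (verit) dist_triangle dist_commute)
  qed
  have "ennreal (real N * V) = (\<Sum>k<N. emeasure lborel (ball (c k) (r/2)))"
    using V by (simp add: ballV ennreal_of_nat_eq_real_of_nat[symmetric] ennreal_mult)
  also have "\<dots> = emeasure lborel (\<Union>k<N. ball (c k) (r/2))"
    using disj by (intro sum_emeasure) auto
  also have "\<dots> \<le> emeasure lborel S"
    using sub Ssets by (intro emeasure_mono) auto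
  finally have "real N * V \<le> M" using M V by (simp add: ennreal_le_iff)
  moreover have "M < real N * V" using N V by (simp add: field_simps)
  ultimately show False by linarith
qed


lemma coercive:
  fixes g :: "'a::euclidean_space \<Rightarrow> ereal"
  assumes cvx: "convex_ereal g" and lsc: "lsc_ereal g" and m: "\<And>y. ereal m \<le> g y"
    and fin: "(\<integral>\<^sup>+ x. ennreal (expneg (g x)) \<partial>lborel) < \<infinity>"
    and pos: "0 < (\<integral>\<^sup>+ x. ennreal (expneg (g x)) \<partial>lborel)"
  shows "\<exists>a>0. \<exists>b. \<forall>x. ereal (a * norm x - b) \<le> g x"
proof -
  define S where "S c = {x. g x \<le> ereal c}" for c
  have gm[measurable]: "g \<in> borel_measurable borel" by (rule lsc_measurable[OF lsc])
  have Scl: "closed (S c)" for c using lsc unfolding lsc_ereal_def S_def by auto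
  have Scv: "convex (S c)" for c unfolding S_def by (rule sublevel_convex[OF cvx])
  have Ssets: "S c \<in> sets lborel" for c using Scl by auto
  have Sfin: "emeasure lborel (S c) < \<infinity>" for c
  proof -
    have "emeasure lborel (S c) = (\<integral>\<^sup>+ x. indicator (S c) x \<partial>lborel)"
      using Ssets by simp
    also have "\<dots> \<le> (\<integral>\<^sup>+ x. ennreal (exp c) * ennreal (expneg (g x)) \<partial>lborel)"
    proof (rule nn_integral_mono)
      fix x show "indicator (S c) x \<le> ennreal (exp c) * ennreal (expneg (g x))"
      proof (cases "x \<in> S c")
        case True
        then obtain v where v: "g x = ereal v" "v \<le> c"
          using m[of x] by (cases "g x") (auto simp: S_def)
        have "1 \<le> exp c * exp (- v)" using v by (simp add: exp_minus field_simps)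
        then show ?thesis using True v by (simp add: ennreal_mult[symmetric] )
      qed simp
    qed
    also have "\<dots> = ennreal (exp c) * (\<integral>\<^sup>+ x. ennreal (expneg (g x)) \<partial>lborel)"
      by (rule nn_integral_cmult) measurable
    also have "\<dots> < \<infinity>" using fin by (simp add: ennreal_mult_less_top)
    finally show ?thesis .
  qed
  have "\<exists>c. 0 < emeasure lborel (S c)"
  proof (rule ccontr)
    assume "\<not> (\<exists>c. 0 < emeasure lborel (S c))"
    then have null: "S c \<in> null_sets lborel" for c using Ssets by (auto simp: null_sets_def)
    have "AE x in lborel. \<forall>n::nat. x \<notin> S (real n)"
      using null by (auto simp: AE_all_countable intro!: AE_not_in)
    then have "AE x in lborel. ennreal (expneg (g x)) = 0"
    proof eventually_elim
      case (elim x)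
      show ?case
      proof (cases "g x")
        case (real v)
        obtain n :: nat where "v \<le> real n" using real_arch_simple by blast
        then have "x \<in> S (real n)" using real by (simp add: S_def)
        then show ?thesis using elim by blast
      qed (use m[of x] in \<open>auto simp: expneg_def\<close>)
    qed
    then have "(\<integral>\<^sup>+ x. ennreal (expneg (g x)) \<partial>lborel) = 0"
      by (simp add: nn_integral_0_iff_AE)
    then show False using pos by simp
  qed
  then obtain c0 where c0: "0 < emeasure lborel (S c0)" by blast
  have "S c0 \<subseteq> S (c0 + 1)" by (auto simp: S_def) (metis ereal_less_eq(3) less_add_one order.trans less_imp_le)
  then have c1: "0 < emeasure lborel (S (c0 + 1))"
    using c0 emeasure_mono[OF _ Ssets] by (metis order_less_le_trans)
  have "S c0 \<noteq> {}" using c0 by auto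
  then obtain z where z: "z \<in> S c0" by blast
  have "bounded (S (c0 + 1))" using bounded_of_measure[OF Scl Scv c1 Sfin] .
  then obtain R where R: "R > 0" "S (c0 + 1) \<subseteq> ball z R" using bounded_subset_ballD by blast
  obtain gz where gz: "g z = ereal gz" "gz \<le> c0" using z m[of z] by (cases "g z") (auto simp: S_def)
  define a where "a = 1 / R"
  define b where "b = max (norm z / R - c0) ((norm z + R) / R - m)"
  have "ereal (a * norm x - b) \<le> g x" for x
  proof (cases "norm (x - z) < R")
    case True
    have "norm x \<le> norm z + norm (x - z)" by (metis norm_triangle_sub add.commute)
    then have "norm x \<le> norm z + R" using True by linarith
    then have "norm x / R \<le> (norm z + R) / R" using R by (simp add: divide_right_mono)
    then have "a * norm x - b \<le> m" by (simp add: a_def b_def)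
    then show ?thesis using m[of x] by (metis ereal_less_eq(3) order.trans)
  next
    case False
    define D where "D = norm (x - z)"
    have D: "R \<le> D" "D > 0" using False R by (auto simp: D_def)
    define t where "t = R / D"
    have t: "0 < t" "t \<le> 1" using D R by (auto simp: t_def)
    define y where "y = (1 - t) *\<^sub>R z + t *\<^sub>R x"
    have "y - z = t *\<^sub>R (x - z)" by (simp add: y_def algebra_simps)
    then have "dist z y = R" using t D R by (simp add: dist_norm norm_minus_commute D_def t_def)
    then have "y \<notin> S (c0 + 1)" using R by auto
    then have gy: "ereal (c0 + 1) < g y" by (simp add: S_def)
    have "g y \<le> ereal (1 - t) * g z + ereal t * g x"
      using cvx t unfolding convex_ereal_def y_def by auto
    show ?thesis
    proof (cases "g x")
      case (real gx)
      have "ereal (c0 + 1) < ereal ((1 - t) * gz + t * gx)"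
        using gy \<open>g y \<le> _\<close> real gz by (metis order_less_le_trans times_ereal.simps(1) plus_ereal.simps(1))
      then have "c0 + 1 < (1 - t) * gz + t * gx" by simp
      moreover have "(1 - t) * gz \<le> (1 - t) * c0" using gz t by (intro mult_left_mono) auto
      ultimately have "1 < t * (gx - c0)" by (simp add: algebra_simps)
      then have "D / R < gx - c0" using R D by (simp add: t_def field_simps)
      moreover have "norm x - norm z \<le> D" using norm_triangle_ineq2[of x z] by (simp add: D_def)
      then have "(norm x - norm z) / R \<le> D / R" using R by (simp add: divide_right_mono)
      ultimately have "a * norm x - b \<le> gx"
        using R by (simp add: a_def b_def diff_divide_distrib)
      then show ?thesis using real by simp
    qed (use m[of x] in auto)
  qed
  then show ?thesis using R by (intro exI[of _ a] conjI exI[of _ b]) (auto simp: a_def)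
qed


lemma exp_poly_bound:
  assumes "0 \<le> (y::real)" shows "y ^ d \<le> fact d * exp y"
proof -
  have "summable (\<lambda>n. y ^ n /\<^sub>R fact n)" using exp_converges[of y] by (rule sums_summable)
  then have "sum (\<lambda>n. y ^ n /\<^sub>R fact n) {d} \<le> (\<Sum>n. y ^ n /\<^sub>R fact n)"
    using assms by (intro sum_le_suminf) auto
  also have "\<dots> = exp y" using exp_converges[of y] by (rule sums_unique[symmetric])
  finally have "y ^ d / fact d \<le> exp y" by (simp add: divide_inverse mult.commute)
  then show ?thesis by (simp add: field_simps)
qed

lemma summable_poly_exp:
  assumes a: "0 < (a::real)" shows "summable (\<lambda>k::nat. exp (- a * real k) * (real k + 1) ^ d)"
proof (rule summable_comparison_test)
  define C where "C = (2 / a) ^ d * fact d * exp (a / 2)"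
  show "summable (\<lambda>k. C * exp (- a / 2) ^ k)"
    using a by (intro summable_mult summable_geometric) simp
  show "\<exists>N. \<forall>n\<ge>N. norm (exp (- a * real n) * (real n + 1) ^ d) \<le> C * exp (- a / 2) ^ n"
  proof (intro exI allI impI)
    fix n :: nat
    have "(a * (real n + 1) / 2) ^ d \<le> fact d * exp (a * (real n + 1) / 2)"
      using a by (intro exp_poly_bound) auto
    then have "(a / 2) ^ d * (real n + 1) ^ d \<le> fact d * exp (a * (real n + 1) / 2)"
      by (simp add: power_mult_distrib[symmetric] mult.commute)
    then have "(real n + 1) ^ d \<le> (2 / a) ^ d * (fact d * exp (a * (real n + 1) / 2))"
      using a by (simp add: field_simps power_divide)
    then have "exp (- a * real n) * (real n + 1) ^ d \<le> exp (- a * real n) * ((2 / a) ^ d * (fact d * exp (a * (real n + 1) / 2)))"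
      by (intro mult_left_mono) auto
    also have "\<dots> = (2 / a) ^ d * fact d * (exp (- a * real n) * exp (a * (real n + 1) / 2))"
      by (simp only: mult_ac)
    also have "exp (- a * real n) * exp (a * (real n + 1) / 2) = exp (- a * real n + a * (real n + 1) / 2)"
      by (rule mult_exp_exp)
    also have "- a * real n + a * (real n + 1) / 2 = a / 2 + - a / 2 * real n"
      by (simp add: field_simps)
    also have "exp (a / 2 + - a / 2 * real n) = exp (a / 2) * exp (- a / 2 * real n)"
      by (rule exp_add)
    also have "(2 / a) ^ d * fact d * (exp (a / 2) * exp (- a / 2 * real n)) = C * exp (- a / 2 * real n)"
      by (simp only: C_def mult_ac)
    also have "\<dots> = C * exp (- a / 2) ^ n"
      by (simp add: exp_of_nat_mult[symmetric] mult.commute)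
    finally show "norm (exp (- a * real n) * (real n + 1) ^ d) \<le> C * exp (- a / 2) ^ n" by simp
  qed
qed

lemma exp_norm_fin:
  assumes a: "0 < (a::real)"
  shows "(\<integral>\<^sup>+ x. ennreal (exp (- a * norm (x::'a::euclidean_space))) \<partial>lborel) < \<infinity>"
proof -
  define U where "U = unit_ball_vol (real DIM('a))"
  have le: "ennreal (exp (- a * norm x)) \<le> (\<Sum>k. ennreal (exp (- a * real k)) * indicator (ball (0::'a) (real k + 1)) x)" for x :: 'a
  proof -
    define k where "k = nat \<lfloor>norm x\<rfloor>"
    have k: "real k \<le> norm x" "norm x < real k + 1" by (auto simp: k_def)
    have "ennreal (exp (- a * norm x)) \<le> ennreal (exp (- a * real k)) * indicator (ball (0::'a) (real k + 1)) x"
      using k a by (auto simp: indicator_def intro!: ennreal_leI)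
    also have "\<dots> \<le> (\<Sum>j. ennreal (exp (- a * real j)) * indicator (ball (0::'a) (real j + 1)) x)"
    proof -
      define F where "F = (\<lambda>j. ennreal (exp (- a * real j)) * indicator (ball (0::'a) (real j + 1)) x)"
      have "(\<Sum>j\<in>{k}. F j) \<le> suminf F" by (intro sum_le_suminf) auto
      then have "F k \<le> suminf F" by (simp del: F_def)
      then show ?thesis by (simp add: F_def)
    qed
    finally show ?thesis .
  qed
  have "(\<integral>\<^sup>+ x. ennreal (exp (- a * norm (x::'a))) \<partial>lborel)
        \<le> (\<integral>\<^sup>+ x. (\<Sum>k. ennreal (exp (- a * real k)) * indicator (ball (0::'a) (real k + 1)) x) \<partial>lborel)"
    by (intro nn_integral_mono le)
  also have "\<dots> = (\<Sum>k. \<integral>\<^sup>+ x. ennreal (exp (- a * real k)) * indicator (ball (0::'a) (real k + 1)) x \<partial>lborel)"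
  proof (intro nn_integral_suminf)
    fix k :: nat
    have [measurable]: "ball (0::'a) (real k + 1) \<in> sets borel" by auto
    show "(\<lambda>x. ennreal (exp (- a * real k)) * indicator (ball (0::'a) (real k + 1)) x) \<in> borel_measurable lborel"
      by measurable
  qed
  also have "\<dots> = (\<Sum>k. ennreal (exp (- a * real k) * (U * (real k + 1) ^ DIM('a))))"
    by (simp add: nn_integral_cmult_indicator emeasure_ball U_def ennreal_mult' add_nonneg_nonneg)
  also have "\<dots> = ennreal (\<Sum>k. exp (- a * real k) * (U * (real k + 1) ^ DIM('a)))"
  proof (rule suminf_ennreal2)
    have "summable (\<lambda>k. exp (- a * real k) * (real k + 1) ^ DIM('a) * U)"
      by (rule summable_mult2[OF summable_poly_exp[OF a]])
    then show "summable (\<lambda>k. exp (- a * real k) * (U * (real k + 1) ^ DIM('a)))"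
      by (simp only: mult_ac)
  qed (auto simp: U_def)
  also have "\<dots> < \<infinity>" by simp
  finally show ?thesis .
qed


lemma quad_ineq:
  assumes "0 < (lam::real)" shows "L * s \<le> s\<^sup>2 / (2 * lam) + L\<^sup>2 * lam / 2"
proof -
  have "0 \<le> (s - L * lam)\<^sup>2 / (2 * lam)" using assms by simp
  also have "(s - L * lam)\<^sup>2 / (2 * lam) = s\<^sup>2 / (2 * lam) + L\<^sup>2 * lam / 2 - L * s"
    using assms by (simp add: field_simps power2_eq_square)
  finally show ?thesis by simp
qed

lemma moreau_lower_lin:
  assumes lam: "0 < lam" and a: "0 < a" and g: "\<And>x. ereal (a * norm x - b) \<le> g x"
  shows "ereal (a * norm x - b - a\<^sup>2 * lam / 2) \<le> moreau_env lam g x"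
  unfolding moreau_env_def
proof (rule INF_greatest)
  fix y
  have "a * norm (x - y) \<le> (norm (x - y))\<^sup>2 / (2 * lam) + a\<^sup>2 * lam / 2" by (rule quad_ineq[OF lam])
  moreover have "a * norm x \<le> a * (norm y + norm (x - y))"
    using norm_triangle_sub[of x y] a by (intro mult_left_mono) (auto simp: add.commute)
  ultimately have "a * norm x - b - a\<^sup>2 * lam / 2 \<le> (a * norm y - b) + (norm (x - y))\<^sup>2 / (2 * lam)"
    by (simp add: algebra_simps)
  then have "ereal (a * norm x - b - a\<^sup>2 * lam / 2) \<le> ereal (a * norm y - b) + ereal ((norm (x - y))\<^sup>2 / (2 * lam))"
    by simp
  also have "\<dots> \<le> g y + ereal ((norm (x - y))\<^sup>2 / (2 * lam))" using g by (intro add_right_mono) auto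
  finally show "ereal (a * norm x - b - a\<^sup>2 * lam / 2) \<le> g y + ereal ((norm (x - y))\<^sup>2 / (2 * lam))" .
qed

lemma moreau_lower_lip:
  assumes lam: "0 < lam" and L: "0 \<le> L" and fin: "\<And>x. \<bar>g x\<bar> \<noteq> \<infinity>"
    and lip: "\<And>x y. \<bar>real_of_ereal (g x) - real_of_ereal (g y)\<bar> \<le> L * dist x y"
  shows "g x - ereal (L\<^sup>2 * lam / 2) \<le> moreau_env lam g x"
  unfolding moreau_env_def
proof (rule INF_greatest)
  fix y
  obtain gx gy where gxy: "g x = ereal gx" "g y = ereal gy" using fin[of x] fin[of y] by force
  have "L * norm (x - y) \<le> (norm (x - y))\<^sup>2 / (2 * lam) + L\<^sup>2 * lam / 2" by (rule quad_ineq[OF lam])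
  moreover have "gx - gy \<le> L * norm (x - y)" using lip[of x y] gxy by (simp add: dist_norm)
  ultimately have "gx - L\<^sup>2 * lam / 2 \<le> gy + (norm (x - y))\<^sup>2 / (2 * lam)" by linarith
  then show "g x - ereal (L\<^sup>2 * lam / 2) \<le> g y + ereal ((norm (x - y))\<^sup>2 / (2 * lam))"
    using gxy by simp
qed

lemma tv_bound:
  fixes h h0 :: "'a::euclidean_space \<Rightarrow> real"
  assumes [measurable]: "h \<in> borel_measurable lborel" "h0 \<in> borel_measurable lborel"
    and le: "\<And>x. 0 \<le> h0 x" "\<And>x. h0 x \<le> h x"
    and Zl: "(\<integral>\<^sup>+ x. ennreal (h x) \<partial>lborel) = ennreal zl"
    and Z0: "(\<integral>\<^sup>+ x. ennreal (h0 x) \<partial>lborel) = ennreal z0"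
    and z: "0 < z0" "z0 \<le> zl"
  shows "(\<integral>\<^sup>+ x. ennreal \<bar>h x / zl - h0 x / z0\<bar> \<partial>lborel) \<le> ennreal (2 * (zl - z0) / z0)"
proof -
  have hnn: "0 \<le> h x" for x using le[of x] by linarith
  have ih: "integrable lborel h" by (rule integrableI_nn_integral_finite[OF _ _ Zl]) (auto simp: hnn)
  have ih0: "integrable lborel h0" by (rule integrableI_nn_integral_finite[OF _ _ Z0]) (auto simp: le)
  have zl0: "0 \<le> zl" using z by linarith
  have "ennreal (integral\<^sup>L lborel h) = ennreal zl"
    using nn_integral_eq_integral[OF ih] hnn Zl by simp
  then have Ih: "integral\<^sup>L lborel h = zl" using zl0 integral_nonneg_AE[of h lborel] hnn by (simp add: ennreal_inj)
  have "ennreal (integral\<^sup>L lborel h0) = ennreal z0"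
    using nn_integral_eq_integral[OF ih0] le Z0 by simp
  then have Ih0: "integral\<^sup>L lborel h0 = z0" using z integral_nonneg_AE[of h0 lborel] le by (simp add: ennreal_inj)
  define F where "F x = (h x - h0 x) / zl + h0 x * (1 / z0 - 1 / zl)" for x
  have Fnn: "0 \<le> F x" for x
  proof -
    have "1 / zl \<le> 1 / z0" using z by (intro divide_left_mono) auto
    then show ?thesis using le[of x] z unfolding F_def by (intro add_nonneg_nonneg mult_nonneg_nonneg divide_nonneg_pos) auto
  qed
  have iF: "integrable lborel F" unfolding F_def using ih ih0 by auto
  have IF: "integral\<^sup>L lborel F = 2 * (zl - z0) / zl"
    unfolding F_def using ih ih0 z Ih Ih0 by (simp add: field_simps)
  have pt: "\<bar>h x / zl - h0 x / z0\<bar> \<le> F x" for x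
  proof -
    have "h0 x / zl \<le> h0 x / z0" using z le[of x] by (intro divide_left_mono) auto
    moreover have "h0 x / zl \<le> h x / zl" using z le[of x] by (intro divide_right_mono) auto
    moreover have "F x = (h x / zl - h0 x / zl) + (h0 x / z0 - h0 x / zl)"
      by (simp add: F_def diff_divide_distrib right_diff_distrib)
    ultimately show ?thesis by (simp add: abs_le_iff)
  qed
  have "(\<integral>\<^sup>+ x. ennreal \<bar>h x / zl - h0 x / z0\<bar> \<partial>lborel) \<le> (\<integral>\<^sup>+ x. ennreal (F x) \<partial>lborel)"
    by (intro nn_integral_mono ennreal_leI pt)
  also have "\<dots> = ennreal (2 * (zl - z0) / zl)"
    using nn_integral_eq_integral[OF iF] Fnn IF by simp
  also have "\<dots> \<le> ennreal (2 * (zl - z0) / z0)"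
    using z by (intro ennreal_leI divide_left_mono) auto
  finally show ?thesis .
qed


theorem proposition1:
  fixes f :: "'a::euclidean_space \<Rightarrow> real"
    and gradf :: "'a \<Rightarrow> 'a"
    and g :: "'a \<Rightarrow> ereal"
    and Lf :: real
  assumes f_below: "\<exists>c. \<forall>x. c \<le> f x"
    and f_convex: "convex_on UNIV f"
    and f_grad: "\<And>x. (f has_derivative (\<lambda>h. gradf x \<bullet> h)) (at x)"
    and f_cont_diff: "continuous_on UNIV gradf"
    and f_lip: "\<And>x y. norm (gradf x - gradf y) \<le> Lf * norm (x - y)"
    and g_below: "\<exists>c. \<forall>x. ereal c \<le> g x"
    and g_proper: "proper_ereal g"
    and g_convex: "convex_ereal g"
    and g_lsc: "lsc_ereal g"
    and H2: "integrable lborel (\<lambda>x. expneg (g x))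
             \<or> ((\<forall>x. g x \<noteq> \<infinity>) \<and>
                (\<exists>L. \<forall>x y. \<bar>real_of_ereal (g x) - real_of_ereal (g y)\<bar> \<le> L * dist x y))"
    and Z_pos: "0 < (\<integral>\<^sup>+ x. ennreal (expneg (ereal (f x) + g x)) \<partial>lborel)"
    and Z_fin: "(\<integral>\<^sup>+ x. ennreal (expneg (ereal (f x) + g x)) \<partial>lborel) < \<infinity>"
  shows "((\<lambda>lam. tv_dist (gibbs_density (\<lambda>x. ereal (f x) + moreau_env lam g x))
                        (gibbs_density (\<lambda>x. ereal (f x) + g x)))
          \<longlongrightarrow> 0) (at_right 0)"
proof -
  obtain mf where mf: "\<And>x. mf \<le> f x" using f_below by blast
  obtain m where m: "\<And>x. ereal m \<le> g x" using g_below by blast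
  have ninf: "\<And>x. g x \<noteq> -\<infinity>" using g_proper by (auto simp: proper_ereal_def)
  obtain y0 where y0: "g y0 \<noteq> \<infinity>" using g_proper by (auto simp: proper_ereal_def)
  have fcont: "continuous_on UNIV f"
    using f_grad by (intro continuous_at_imp_continuous_on ballI) (metis has_derivative_continuous)
  have fm[measurable]: "f \<in> borel_measurable borel" using fcont by (rule borel_measurable_continuous_onI)
  have gm[measurable]: "g \<in> borel_measurable borel" by (rule lsc_measurable[OF g_lsc])
  define G where "G lam x = moreau_env lam g x" for lam x
  define h where "h lam x = expneg (ereal (f x) + G lam x)" for lam x
  define h0 where "h0 x = expneg (ereal (f x) + g x)" for x
  define Z where "Z lam = (\<integral>\<^sup>+ x. ennreal (h lam x) \<partial>lborel)" for lam
  define Z0 where "Z0 = (\<integral>\<^sup>+ x. ennreal (h0 x) \<partial>lborel)"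
  have hm: "(\<lambda>x. h lam x) \<in> borel_measurable lborel" if lam: "0 < lam" for lam
  proof -
    have [measurable]: "(\<lambda>x. moreau_env lam g x) \<in> borel_measurable borel"
      using moreau_measurable[of lam g, OF lam ninf] by simp
    show ?thesis unfolding h_def G_def by measurable
  qed
  have h0m: "h0 \<in> borel_measurable lborel" unfolding h0_def by measurable
  have Gge: "ereal m \<le> G lam x" if "0 < lam" for lam x
    unfolding G_def using moreau_ge[of lam m g, OF that m] .
  have Gle: "G lam x \<le> g x" if "0 < lam" for lam x unfolding G_def using moreau_le[OF that] .
  have Gfin: "G lam x < \<infinity>" if "0 < lam" for lam x unfolding G_def using moreau_fin[of lam g y0, OF that y0 ninf] .
  have h0_nn: "0 \<le> h0 x" for x by (simp add: h0_def expneg_nonneg)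
  have h0_le: "h0 x \<le> h lam x" if "0 < lam" for lam x
    unfolding h0_def h_def
    by (rule expneg_antimono) (use Gle[OF that, of x] Gge[OF that, of x] in \<open>auto intro: add_left_mono\<close>)
  have h_mono: "h l1 x \<le> h l2 x" if "0 < l1" "l1 \<le> l2" for l1 l2 x
  proof -
    have "0 < l2" using that by linarith
    have "ereal (f x) + moreau_env l2 g x \<le> ereal (f x) + moreau_env l1 g x"
      using moreau_mono[OF that, of g x] by (rule add_left_mono)
    moreover have "ereal (f x) + moreau_env l2 g x \<noteq> -\<infinity>"
      using Gge[OF \<open>0 < l2\<close>, of x] by (auto simp: G_def)
    ultimately show ?thesis unfolding h_def G_def by (rule expneg_antimono)
  qed
  have Z_mono: "Z l1 \<le> Z l2" if "0 < l1" "l1 \<le> l2" for l1 l2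
    unfolding Z_def using h_mono[OF that] by (intro nn_integral_mono ennreal_leI) auto
  have Z0_le: "Z0 \<le> Z lam" if "0 < lam" for lam
    unfolding Z_def Z0_def using h0_le[OF that] by (intro nn_integral_mono ennreal_leI) auto
  have Z0_eq: "Z0 = (\<integral>\<^sup>+ x. ennreal (expneg (ereal (f x) + g x)) \<partial>lborel)" by (simp add: Z0_def h0_def)
  have Z1: "Z 1 < \<infinity>"
  proof (cases "integrable lborel (\<lambda>x. expneg (g x))")
    case True
    have egm: "(\<lambda>x. ennreal (expneg (g x))) \<in> borel_measurable lborel" by measurable
    have Ig_fin: "(\<integral>\<^sup>+ x. ennreal (expneg (g x)) \<partial>lborel) < \<infinity>"
      using integrableD(2)[OF True] by (simp add: less_top)
    have h0_le_g: "ennreal (h0 x) \<le> ennreal (exp (- mf)) * ennreal (expneg (g x))" for x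
    proof (cases "g x")
      case (real v)
      have "exp (- (f x + v)) \<le> exp (- mf) * exp (- v)" using mf[of x] by (simp add: mult_exp_exp)
      then show ?thesis using real by (simp add: h0_def ennreal_mult[symmetric])
    qed (use ninf[of x] in \<open>auto simp: h0_def expneg_def\<close>)
    have "Z0 \<le> (\<integral>\<^sup>+ x. ennreal (exp (- mf)) * ennreal (expneg (g x)) \<partial>lborel)"
      unfolding Z0_def by (intro nn_integral_mono h0_le_g)
    also have "\<dots> = ennreal (exp (- mf)) * (\<integral>\<^sup>+ x. ennreal (expneg (g x)) \<partial>lborel)"
      using egm by (rule nn_integral_cmult)
    finally have Z0le: "Z0 \<le> ennreal (exp (- mf)) * (\<integral>\<^sup>+ x. ennreal (expneg (g x)) \<partial>lborel)" .
    have Ig_pos: "0 < (\<integral>\<^sup>+ x. ennreal (expneg (g x)) \<partial>lborel)"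
    proof (rule ccontr)
      assume "\<not> ?thesis"
      then have "(\<integral>\<^sup>+ x. ennreal (expneg (g x)) \<partial>lborel) = 0" by (simp add: not_less)
      then have "Z0 \<le> 0" using Z0le by simp
      then show False using Z_pos Z0_eq by simp
    qed
    obtain a b where a: "0 < a" and ab: "\<And>x. ereal (a * norm x - b) \<le> g x"
      using coercive[of g m, OF g_convex g_lsc m Ig_fin Ig_pos] by blast
    define C where "C = exp (- mf + b + a\<^sup>2 / 2)"
    have hb: "ennreal (h 1 x) \<le> ennreal C * ennreal (exp (- a * norm x))" for x
    proof -
      have low: "ereal (a * norm x - b - a\<^sup>2 * 1 / 2) \<le> G 1 x"
        unfolding G_def by (rule moreau_lower_lin[OF _ a ab]) simp
      obtain w where w: "G 1 x = ereal w" using Gfin[of 1 x] Gge[of 1 x] by (cases "G 1 x") auto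
      have "a * norm x - b - a\<^sup>2 / 2 \<le> w" using low w by simp
      then have "- (f x + w) \<le> (- mf + b + a\<^sup>2 / 2) + (- a * norm x)" using mf[of x] by linarith
      then have "exp (- (f x + w)) \<le> exp ((- mf + b + a\<^sup>2 / 2) + (- a * norm x))" by simp
      also have "\<dots> = C * exp (- a * norm x)" unfolding C_def by (rule exp_add)
      finally have "ennreal (exp (- (f x + w))) \<le> ennreal (C * exp (- a * norm x))" by (rule ennreal_leI)
      also have "\<dots> = ennreal C * ennreal (exp (- a * norm x))" by (rule ennreal_mult) (auto simp: C_def)
      finally show ?thesis using w by (simp add: h_def)
    qed
    have "Z 1 \<le> (\<integral>\<^sup>+ x. ennreal C * ennreal (exp (- a * norm (x::'a))) \<partial>lborel)"
      unfolding Z_def by (rule nn_integral_mono) (rule hb)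
    also have "\<dots> = ennreal C * (\<integral>\<^sup>+ x. ennreal (exp (- a * norm (x::'a))) \<partial>lborel)"
      by (rule nn_integral_cmult) measurable
    also have "\<dots> < \<infinity>" using exp_norm_fin[OF a, where 'a='a] by (simp add: ennreal_mult_less_top)
    finally show ?thesis .
  next
    case False
    then obtain L where L: "\<And>x y. \<bar>real_of_ereal (g x) - real_of_ereal (g y)\<bar> \<le> L * dist x y"
      and gfin: "\<And>x. g x \<noteq> \<infinity>" using H2 by blast
    define L' where "L' = max L 0"
    have fin: "\<bar>g x\<bar> \<noteq> \<infinity>" for x using gfin[of x] ninf[of x] by auto
    have lip': "\<bar>real_of_ereal (g x) - real_of_ereal (g y)\<bar> \<le> L' * dist x y" for x y
    proof -
      have "L * dist x y \<le> L' * dist x y" by (intro mult_right_mono) (auto simp: L'_def)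
      then show ?thesis using L[of x y] by linarith
    qed
    define c where "c = L'\<^sup>2 * 1 / 2"
    have hb: "ennreal (h 1 x) \<le> ennreal (exp c) * ennreal (h0 x)" for x
    proof -
      have low: "g x - ereal c \<le> G 1 x"
        unfolding G_def c_def by (rule moreau_lower_lip) (use fin lip' in \<open>auto simp: L'_def\<close>)
      obtain w where w: "G 1 x = ereal w" using Gfin[of 1 x] Gge[of 1 x] by (cases "G 1 x") auto
      obtain gx where gx: "g x = ereal gx" using fin[of x] by force
      have "gx - c \<le> w" using low w gx by simp
      then have "- (f x + w) \<le> c + (- (f x + gx))" by linarith
      then have "exp (- (f x + w)) \<le> exp (c + (- (f x + gx)))" by simp
      also have "\<dots> = exp c * exp (- (f x + gx))" by (simp add: exp_add)
      finally have "ennreal (exp (- (f x + w))) \<le> ennreal (exp c * exp (- (f x + gx)))" by (rule ennreal_leI)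
      also have "\<dots> = ennreal (exp c) * ennreal (exp (- (f x + gx)))" by (rule ennreal_mult) auto
      finally show ?thesis using w gx by (simp add: h_def h0_def)
    qed
    have "Z 1 \<le> (\<integral>\<^sup>+ x. ennreal (exp c) * ennreal (h0 x) \<partial>lborel)"
      unfolding Z_def by (rule nn_integral_mono) (rule hb)
    also have "\<dots> = ennreal (exp c) * Z0"
      unfolding Z0_def using h0m by (intro nn_integral_cmult) (simp add: measurable_lborel2)
    also have "\<dots> < \<infinity>" using Z_fin Z0_eq by (simp add: ennreal_mult_less_top)
    finally show ?thesis .
  qed
  have Zfin: "Z lam < \<infinity>" if "0 < lam" "lam \<le> 1" for lam
    using Z_mono[OF that] Z1 by (rule le_less_trans)
  define sq where "sq n = 1 / real (Suc n)" for n
  have sq_pos: "0 < sq n" for n by (simp add: sq_def)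
  have sq_mono: "sq (Suc n) \<le> sq n" for n by (simp add: sq_def frac_le)
  have sq_lim: "filterlim sq (at_right 0) sequentially"
  proof (rule tendsto_imp_filterlim_at_right)
    show "sq \<longlonglongrightarrow> 0" unfolding sq_def using LIMSEQ_Suc[OF lim_const_over_n[of "1::real"]] by simp
    show "eventually (\<lambda>n. 0 < sq n) sequentially" using sq_pos by simp
  qed
  have hmn: "(\<lambda>x. ennreal (h (sq n) x)) \<in> borel_measurable lborel" for n
    using hm[OF sq_pos[of n]] by auto
  have hINF: "(INF n. ennreal (h (sq n) x)) = ennreal (h0 x)" for x
  proof -
    have dec: "decseq (\<lambda>n. ennreal (h (sq n) x))"
      by (intro decseq_SucI ennreal_leI h_mono sq_pos sq_mono)
    have "((\<lambda>lam. G lam x) \<longlongrightarrow> g x) (at_right 0)"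
      unfolding G_def by (rule moreau_tendsto[of g m x, OF g_lsc m])
    then have "((\<lambda>n. G (sq n) x) \<longlongrightarrow> g x) sequentially"
      by (rule filterlim_compose[OF _ sq_lim])
    then have "((\<lambda>n. ereal (f x) + G (sq n) x) \<longlongrightarrow> ereal (f x) + g x) sequentially"
      by (intro tendsto_add_ereal_general tendsto_const) auto
    then have "((\<lambda>n. h (sq n) x) \<longlongrightarrow> h0 x) sequentially"
      unfolding h_def h0_def by (rule expneg_tendsto) (use ninf[of x] in auto)
    then have "((\<lambda>n. ennreal (h (sq n) x)) \<longlongrightarrow> ennreal (h0 x)) sequentially"
      by (rule tendsto_ennrealI)
    from LIMSEQ_unique[OF LIMSEQ_INF[OF dec] this] show ?thesis .
  qed
  have Z0_INF: "Z0 = (INF n. Z (sq n))"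
  proof -
    have dec: "decseq (\<lambda>n x. ennreal (h (sq n) x))"
      by (intro decseq_SucI le_funI ennreal_leI h_mono sq_pos sq_mono)
    have "(\<integral>\<^sup>+ x. (INF n. ennreal (h (sq n) x)) \<partial>lborel) = (INF n. \<integral>\<^sup>+ x. ennreal (h (sq n) x) \<partial>lborel)"
      by (rule nn_integral_monotone_convergence_INF_decseq[OF dec, where i=0]) 
         (use hmn Zfin[OF sq_pos[of 0]] in \<open>auto simp: Z_def sq_def\<close>)
    then show ?thesis by (simp add: hINF Z0_def Z_def)
  qed
  have Zlim: "(Z \<longlongrightarrow> Z0) (at_right 0)"
  proof (rule order_tendstoI)
    fix y assume "y < Z0"
    show "eventually (\<lambda>lam. y < Z lam) (at_right 0)"
      using eventually_at_right_less[of "0::real"]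
      by eventually_elim (rule less_le_trans[OF \<open>y < Z0\<close> Z0_le])
  next
    fix y assume "Z0 < y"
    then obtain n where n: "Z (sq n) < y" using Z0_INF by (auto simp: INF_less_iff)
    show "eventually (\<lambda>lam. Z lam < y) (at_right 0)"
      using eventually_at_right_real[OF sq_pos[of n]]
    proof eventually_elim
      case (elim lam)
      then have "Z lam \<le> Z (sq n)" by (intro Z_mono) auto
      then show ?case using n by (rule le_less_trans)
    qed
  qed
  have Z0pos: "0 < Z0" using Z_pos Z0_eq by simp
  have Z0fin: "Z0 < \<infinity>" using Z_fin Z0_eq by simp
  define z0 where "z0 = enn2real Z0"
  have z0e: "Z0 = ennreal z0" unfolding z0_def by (rule ennreal_enn2real[symmetric]) (use Z0fin in simp)
  have z0p: "0 < z0" using Z0pos Z0fin unfolding z0_def by (simp add: enn2real_positive_iff)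
  define zl where "zl lam = enn2real (Z lam)" for lam
  have gd0: "gibbs_density (\<lambda>x. ereal (f x) + g x) = (\<lambda>x. h0 x / z0)"
    unfolding gibbs_density_def z0_def Z0_def h0_def by (rule refl)
  have gdl: "gibbs_density (\<lambda>x. ereal (f x) + moreau_env lam g x) = (\<lambda>x. h lam x / zl lam)" for lam
    unfolding gibbs_density_def zl_def Z_def h_def G_def by (rule refl)
  have bound: "tv_dist (gibbs_density (\<lambda>x. ereal (f x) + moreau_env lam g x))
                        (gibbs_density (\<lambda>x. ereal (f x) + g x))
       \<le> ennreal (2 * (zl lam - z0) / z0)" if lam: "0 < lam" "lam \<le> 1" for lam
  proof -
    have Zl: "Z lam = ennreal (zl lam)" unfolding zl_def
      by (rule ennreal_enn2real[symmetric]) (use Zfin[OF lam] in simp)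
    have "ennreal z0 \<le> ennreal (zl lam)" using Z0_le[OF lam(1)] unfolding z0e Zl .
    then have zle: "z0 \<le> zl lam" by (simp add: ennreal_le_iff zl_def)
    have "tv_dist (gibbs_density (\<lambda>x. ereal (f x) + moreau_env lam g x))
                        (gibbs_density (\<lambda>x. ereal (f x) + g x))
          = (\<integral>\<^sup>+ x. ennreal \<bar>h lam x / zl lam - h0 x / z0\<bar> \<partial>lborel)"
      unfolding gd0 gdl tv_dist_def by (rule refl)
    also have "\<dots> \<le> ennreal (2 * (zl lam - z0) / z0)"
    proof (rule tv_bound[OF hm[OF lam(1)] h0m h0_nn h0_le[OF lam(1)] _ _ z0p zle])
      show "(\<integral>\<^sup>+ x. ennreal (h lam x) \<partial>lborel) = ennreal (zl lam)" using Zl unfolding Z_def .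
      show "(\<integral>\<^sup>+ x. ennreal (h0 x) \<partial>lborel) = ennreal z0" using z0e unfolding Z0_def .
    qed
    finally show ?thesis .
  qed
  have "((\<lambda>lam. zl lam) \<longlongrightarrow> z0) (at_right 0)"
    unfolding zl_def using Zlim unfolding z0e by (rule tendsto_enn2real) (use z0p in simp)
  then have "((\<lambda>lam. 2 * (zl lam - z0) / z0) \<longlongrightarrow> 2 * (z0 - z0) / z0) (at_right 0)"
    by (intro tendsto_divide tendsto_mult tendsto_diff tendsto_const) (use z0p in auto)
  then have lim2: "((\<lambda>lam. ennreal (2 * (zl lam - z0) / z0)) \<longlongrightarrow> 0) (at_right 0)"
    using tendsto_ennrealI by fastforce
  show ?thesis
  proof (rule tendsto_sandwich[OF _ _ tendsto_const lim2])
    show "eventually (\<lambda>lam. 0 \<le> tv_dist (gibbs_density (\<lambda>x. ereal (f x) + moreau_env lam g x))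
                        (gibbs_density (\<lambda>x. ereal (f x) + g x))) (at_right 0)"
      by (intro always_eventually allI zero_le)
    show "eventually (\<lambda>lam. tv_dist (gibbs_density (\<lambda>x. ereal (f x) + moreau_env lam g x))
                        (gibbs_density (\<lambda>x. ereal (f x) + g x)) \<le> ennreal (2 * (zl lam - z0) / z0)) (at_right 0)"
      using eventually_at_right_real[OF zero_less_one]
    proof eventually_elim
      case (elim lam)
      then show ?case by (intro bound) auto
    qed
  qed
qed

end
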